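(* Let $q$ be odd, $\varepsilon=\left(\frac{-1}{q}\right)$, $m=(q-\varepsilon)/4$. (i) The map $\pi(b)=b^2-2$ is a permutation of $\mathcal B_2^{-+}$, and for $b\in\mathcal B_2^{-+}$, $\pi^{-1}(b)=\prod\{b-a: a\in\mathcal B_2^{--}\}$; moreover $\pi^{-1}(b)$ is the unique square root of $2+b$ such that $2+\sqrt{2+b}$ is a square. (ii) The map $\sigma(b)=2-b^2$ is a permutation of $\mathcal B_2^{+-}$, and for $b\in\mathcal B_2^{+-}$, $\sigma^{-1}(b)=-\left(\frac{2}{q}\right)\prod\{b-a:a\in\mathcal B_2^{--}\}$; moreover $\sigma^{-1}(b)$ is the unique square root of $2-b$ such that $\sqrt{2-b}+2$ is a nonsquare. (iii) Let $\lambda\in{\mathbb F}_q^\times$ and $\nu=\left(\frac{2\lambda}{q}\right)$. Then $\pi_\lambda(b)=(2\nu/\lambda)b^2-\nu\lambda$ is a permutation of $\mathcal B_\lambda^{-+}$ and $\sigma_\lambda(b)=-(2\nu/\lambda)b^2+\nu\lambda$ is a permutation of $\mathcal B_\lambda^{+-}$, with inverses $\pi_\lambda^{-1}(b)=(2\nu/\lambda)^{m-1}\prod\{b-a:a\in\mathcal B_\lambda^{-\nu,-\nu}\}$ for $b\in\mathcal B_\lambda^{-+}$ and $\sigma_\lambda^{-1}(b)=-\left(\frac2q\right)(2\nu/\lambda)^{m-1}\prod\{b-a:a\in\mathcal B_\lambda^{-\nu,-\nu}\}$ for $b\in\mathcal B_\lambda^{+-}$. If $b\in\mathcal B_\lambda^{-+}$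 and $c=\pi_\lambda^{-1}(b)$ then $c$ is the square root of $(\lambda\nu b+\lambda^2)/2$ for which $c+\lambda$ is a square; if $b\in\mathcal B_\lambda^{+-}$ and $c=\sigma_\lambda^{-1}(b)$ then $c$ is the square root of $(-\lambda\nu b+\lambda^2)/2$ for which $c+\lambda$ is a nonsquare.
   Context: $\left(\frac{a}{q}\right)$ is the Legendre symbol on ${\mathbb F}_q$ ($1$ for nonzero squares, $-1$ for nonsquares, $0$ at $0$). For $\lambda\in{\mathbb F}_q^\times$ and $\varepsilon_1,\varepsilon_2\in\{1,-1\}$ (written $+,-$), $\mathcal B_\lambda^{\varepsilon_1,\varepsilon_2}=\{b\in{\mathbb F}_q:\left(\frac{\lambda-b}{q}\right)=\varepsilon_1,\ \left(\frac{\lambda+b}{q}\right)=\varepsilon_2\}$. *)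

theory Defs
  imports Main
begin

definition leg :: "'a::{finite,field} \<Rightarrow> int" where
  "leg a = (if a = 0 then 0 else if (\<exists>y. y ^ 2 = a) then 1 else -1)"

definition is_square :: "'a::field \<Rightarrow> bool" where
  "is_square x \<longleftrightarrow> (\<exists>y. y ^ 2 = x)"

definition Bset :: "'a::{finite,field} \<Rightarrow> int \<Rightarrow> int \<Rightarrow> 'a set" where
  "Bset l e1 e2 = {b. leg (l - b) = e1 \<and> leg (l + b) = e2}"

definition mval :: "'a::{finite,field} itself \<Rightarrow> nat" where
  "mval _ = nat ((int (card (UNIV::'a set)) - leg (-1::'a)) div 4)"

end

theory Submission
  imports Defs "HOL-Library.Cardinality" "HOL-Computational_Algebra.Polynomial" "HOL-Number_Theory.Cong"
begin

context
  assumes "SORT_CONSTRAINT('a::{finite,field})"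
  assumes oddq: "odd (CARD('a))"
begin

lemma card_ge3: "CARD('a) \<ge> 3"
proof -
  have "{0::'a, 1} \<subseteq> UNIV" by simp
  hence "card {0::'a,1} \<le> CARD('a)" by (intro card_mono) auto
  hence "CARD('a) \<ge> 2" by simp
  with oddq show ?thesis by presburger
qed

lemma of_nat_card: "of_nat CARD('a) = (0::'a)"
proof -
  have "(\<Sum>x\<in>(UNIV::'a set). x + 1) = (\<Sum>x\<in>UNIV. x)"
    by (rule sum.reindex_bij_witness[of _ "\<lambda>x. x - 1" "\<lambda>x. x + 1"]) auto
  thus ?thesis by (simp add: sum.distrib)
qed

lemma two_ne0: "(2::'a) \<noteq> 0"
proof
  assume h2: "(2::'a) = 0"
  obtain j where j: "CARD('a) = 2*j+1" using oddq oddE by blast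
  have "(of_nat CARD('a)::'a) = 2 * of_nat j + 1" by (simp add: j)
  also have "\<dots> = 1" by (simp add: h2)
  finally show False using of_nat_card by simp
qed

lemma fermat: assumes "(x::'a) \<noteq> 0" shows "x ^ (CARD('a) - 1) = 1"
proof -
  let ?S = "UNIV - {0::'a}"
  have "(\<Prod>y\<in>?S. x * y) = (\<Prod>y\<in>?S. y)"
    by (rule prod.reindex_bij_witness[of _ "\<lambda>y. y / x" "\<lambda>y. x * y"]) (use assms in auto)
  moreover have "(\<Prod>y\<in>?S. x * y) = x ^ card ?S * (\<Prod>y\<in>?S. y)"
    by (simp add: prod.distrib)
  moreover have "(\<Prod>y\<in>?S. y) \<noteq> 0" by simp
  moreover have "card ?S = CARD('a) - 1" by (simp add: card_Diff_subset)
  ultimately show ?thesis by simp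
qed

lemma fermat': "(x::'a) ^ CARD('a) = x"
proof (cases "x = 0")
  case True thus ?thesis using card_ge3 by simp
next
  case False
  have "x ^ CARD('a) = x * x ^ (CARD('a) - 1)" using card_ge3
    by (metis Suc_diff_1 bot_nat_0.not_eq_extremum not_numeral_le_zero power_Suc zero_less_iff_neq_zero)
  thus ?thesis using fermat[OF False] by simp
qed

lemma card_eq_h: "CARD('a) = 2 * ((CARD('a) - 1) div 2) + 1"
  using oddq by presburger

lemma h_pos: "(CARD('a) - 1) div 2 \<ge> 1" using card_ge3 by linarith

lemma sqroots_sub: assumes "r ^ 2 = (s::'a)" shows "{y. y ^ 2 = s} = {r, -r}"
proof -
  have "y ^ 2 = r ^ 2 \<longleftrightarrow> y = r \<or> y = - r" for y
    by (metis power2_eq_iff)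
  thus ?thesis using assms by auto
qed

lemma card_sq_ge: "(CARD('a) - 1) div 2 \<le> card {x::'a. x \<noteq> 0 \<and> is_square x}"
proof -
  let ?Sq = "{x::'a. x \<noteq> 0 \<and> is_square x}"
  have sub: "UNIV - {0::'a} \<subseteq> (\<Union>s\<in>?Sq. {y. y ^ 2 = s})"
    by (auto simp: is_square_def)
  have "card (UNIV - {0::'a}) \<le> card (\<Union>s\<in>?Sq. {y. y ^ 2 = s})"
    by (rule card_mono[OF _ sub]) simp
  also have "\<dots> \<le> (\<Sum>s\<in>?Sq. card {y. y ^ 2 = s})" by (rule card_UN_le) simp
  also have "\<dots> \<le> (\<Sum>s\<in>?Sq. 2)"
  proof (rule sum_mono)
    fix s assume "s \<in> ?Sq"
    then obtain r where "r ^ 2 = s" by (auto simp: is_square_def)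
    hence "{y. y ^ 2 = s} = {r, -r}" by (rule sqroots_sub)
    thus "card {y. y ^ 2 = s} \<le> 2" by (simp add: card_insert_le_m1)
  qed
  finally have "CARD('a) - 1 \<le> 2 * card ?Sq" by (simp add: card_Diff_subset)
  thus ?thesis by linarith
qed

lemma euler_sq: assumes "is_square (x::'a)" "x \<noteq> 0" shows "x ^ ((CARD('a) - 1) div 2) = 1"
proof -
  obtain y where y: "y ^ 2 = x" using assms by (auto simp: is_square_def)
  hence "y \<noteq> 0" using assms by auto
  have "x ^ ((CARD('a) - 1) div 2) = y ^ (2 * ((CARD('a) - 1) div 2))"
    by (simp add: y[symmetric] power_mult)
  also have "2 * ((CARD('a) - 1) div 2) = CARD('a) - 1" using card_eq_h by linarith
  finally show ?thesis using fermat[OF \<open>y \<noteq> 0\<close>] by simp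
qed

lemma euler_conv: assumes "(x::'a) ^ ((CARD('a) - 1) div 2) = 1" shows "is_square x"
proof -
  define h where "h = (CARD('a) - 1) div 2"
  let ?Sq = "{x::'a. x \<noteq> 0 \<and> is_square x}"
  let ?p = "monom (1::'a) h - 1"
  have hp: "h \<ge> 1" using h_pos h_def by simp
  have p0: "?p \<noteq> 0"
  proof
    assume "?p = 0"
    hence "coeff ?p h = 0" by simp
    thus False using hp by simp
  qed
  have dp: "degree ?p \<le> h"
    by (intro degree_diff_le) (auto simp: degree_monom_le)
  have sub: "?Sq \<subseteq> {x. poly ?p x = 0}"
    using euler_sq h_def by (auto simp: poly_monom)
  have "card {x. poly ?p x = 0} \<le> h" using card_poly_roots_bound[OF p0] dp by linarith
  moreover have "card ?Sq \<le> card {x. poly ?p x = 0}"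
    by (intro card_mono sub poly_roots_finite p0)
  ultimately have eq: "?Sq = {x. poly ?p x = 0}"
    using card_sq_ge h_def sub by (intro card_subset_eq) (auto intro: poly_roots_finite p0)
  have "x \<noteq> 0" using assms hp h_def by (auto simp: zero_power)
  moreover have "poly ?p x = 0" using assms h_def by (simp add: poly_monom)
  ultimately show ?thesis using eq by auto
qed

lemma euler: "(of_int (leg x) :: 'a) = x ^ ((CARD('a) - 1) div 2)"
proof -
  define h where "h = (CARD('a) - 1) div 2"
  have hp: "h \<ge> 1" using h_pos h_def by simp
  show ?thesis
  proof (cases "x = 0")
    case True thus ?thesis using hp h_def by (simp add: leg_def)
  next
    case False
    show ?thesis
    proof (cases "is_square x")
      case True thus ?thesis using euler_sq False by (simp add: leg_def is_square_def)
    next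
      case ns: False
      have "(x ^ h) ^ 2 = x ^ (CARD('a) - 1)"
        using card_eq_h h_def by (metis power_mult mult.commute add_diff_cancel_right')
      hence "(x ^ h) ^ 2 = 1" using fermat False by simp
      hence "x ^ h = 1 \<or> x ^ h = -1" by (simp add: power2_eq_1_iff)
      moreover have "x ^ h \<noteq> 1" using euler_conv ns h_def by blast
      ultimately show ?thesis using ns False h_def by (simp add: leg_def is_square_def)
    qed
  qed
qed

end

context
  assumes "SORT_CONSTRAINT('a::{finite,field})"
  assumes oddq: "odd (CARD('a))"
begin

lemma leg_zero[simp]: "leg (0::'a) = 0" by (simp add: leg_def)
lemma leg_cases: "leg (x::'a) \<in> {-1,0,1}" by (simp add: leg_def)
lemma leg_0_iff: "leg (x::'a) = 0 \<longleftrightarrow> x = 0" by (simp add: leg_def)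
lemma leg_1_iff: "leg (x::'a) = 1 \<longleftrightarrow> x \<noteq> 0 \<and> is_square x" by (simp add: leg_def is_square_def)
lemma leg_m1_iff: "leg (x::'a) = -1 \<longleftrightarrow> \<not> is_square x"
  by (auto simp add: leg_def is_square_def)

lemma of_int_inj3: assumes "u \<in> {-1,0,1::int}" "v \<in> {-1,0,1}" "(of_int u::'a) = of_int v"
  shows "u = v"
proof -
  have "(1::'a) \<noteq> -1" using two_ne0[OF oddq]
    by (metis add_eq_0_iff one_add_one)
  thus ?thesis using assms by auto
qed

lemma leg_mult: "leg ((x::'a) * y) = leg x * leg y"
proof (rule of_int_inj3)
  show "leg (x * y) \<in> {-1,0,1}" by (rule leg_cases)
  show "leg x * leg y \<in> {-1,0,1}" using leg_cases[of x] leg_cases[of y] by auto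
  show "(of_int (leg (x * y))::'a) = of_int (leg x * leg y)"
    by (simp add: euler[OF oddq] power_mult_distrib)
qed

lemma leg_sq: "(x::'a) \<noteq> 0 \<Longrightarrow> leg (x^2) = 1" by (auto simp: leg_def)
lemma leg_one: "leg (1::'a) = 1" using leg_sq[of 1] by simp
lemma leg_sq_mult: "(x::'a) \<noteq> 0 \<Longrightarrow> leg (x^2 * y) = leg y" by (simp add: leg_mult leg_sq)
lemma leg_sqr: "leg (x::'a) * leg x = (if x = 0 then 0 else 1)"
  using leg_cases[of x] by (auto simp: leg_def)

lemma fiber: "int (card {b::'a. b^2 = t}) = 1 + leg t"
proof (cases "t = 0")
  case True thus ?thesis by (simp add: leg_def)
next
  case False
  show ?thesis
  proof (cases "is_square t")
    case True
    then obtain r where r: "r ^ 2 = t" by (auto simp: is_square_def)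
    hence "r \<noteq> 0" using False by auto
    hence "r \<noteq> - r" using two_ne0[OF oddq] by (metis add_eq_0_iff mult_2 no_zero_divisors)
    have "{b. b^2 = t} = {r, -r}" by (rule sqroots_sub[OF oddq r])
    thus ?thesis using \<open>r \<noteq> -r\<close> True False by (simp add: leg_def is_square_def)
  next
    case ns: False
    hence "{b. b^2 = t} = {}" by (auto simp: is_square_def)
    thus ?thesis using ns False by (simp add: leg_def is_square_def)
  qed
qed

lemma sum_sq: "(\<Sum>b\<in>UNIV. f ((b::'a)^2)) = (\<Sum>t\<in>UNIV. f t * int (card {b::'a. b^2 = t}))"
proof -
  have "(\<Sum>t\<in>UNIV. f t * int (card {b::'a. b^2 = t})) = (\<Sum>t\<in>UNIV. \<Sum>b\<in>UNIV. if b^2 = t then f t else 0)"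
  proof (rule sum.cong)
    fix t :: 'a
    have "(\<Sum>b\<in>UNIV. if b^2 = t then f t else 0) = (\<Sum>b\<in>{b. b^2 = t}. f t)"
      by (simp add: sum.If_cases Int_def)
    thus "f t * int (card {b::'a. b^2 = t}) = (\<Sum>b\<in>UNIV. if b^2 = t then f t else 0)" by simp
  qed simp
  also have "\<dots> = (\<Sum>b\<in>UNIV. \<Sum>t\<in>UNIV. if b^2 = t then f t else 0)" by (rule sum.swap)
  also have "\<dots> = (\<Sum>b\<in>UNIV. f (b^2))" by simp
  finally show ?thesis by simp
qed

lemma sum_leg: "(\<Sum>x\<in>UNIV. leg (x::'a)) = 0"
proof -
  have "(\<Sum>b\<in>(UNIV::'a set). (\<lambda>_. 1::int) (b^2)) = (\<Sum>t\<in>UNIV. 1 * int (card {b::'a. b^2 = t}))"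
    by (rule sum_sq)
  hence "int CARD('a) = (\<Sum>t\<in>(UNIV::'a set). 1 + leg t)" by (simp add: fiber)
  thus ?thesis by (simp add: sum.distrib)
qed

lemma sum_leg_add: "(\<Sum>x\<in>UNIV. leg (c + (x::'a))) = 0"
proof -
  have "(\<Sum>x\<in>UNIV. leg (c + (x::'a))) = (\<Sum>x\<in>UNIV. leg (x::'a))"
    by (rule sum.reindex_bij_witness[where i="\<lambda>x. x - c" and j="\<lambda>x. c + x"]) auto
  thus ?thesis using sum_leg by simp
qed

lemma sum_leg_sub: "(\<Sum>x\<in>UNIV. leg (c - (x::'a))) = 0"
proof -
  have "(\<Sum>x\<in>UNIV. leg (c - (x::'a))) = (\<Sum>x\<in>UNIV. leg (x::'a))"
    by (rule sum.reindex_bij_witness[where i="\<lambda>x. c - x" and j="\<lambda>x. c - x"]) auto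
  thus ?thesis using sum_leg by simp
qed

lemma sum_leg_quad: assumes c: "(c::'a) \<noteq> 0" shows "(\<Sum>b\<in>UNIV. leg (b^2 - c)) = -1"
proof -
  have "(\<Sum>b\<in>UNIV. leg (b^2 - c)) = (\<Sum>t\<in>UNIV. leg (t - c) * int (card {b::'a. b^2 = t}))"
    by (rule sum_sq[where f = "\<lambda>t. leg (t - c)"])
  also have "\<dots> = (\<Sum>t\<in>UNIV. leg (t - c) * (1 + leg t))"
    by (simp add: fiber)
  also have "\<dots> = (\<Sum>t\<in>UNIV. leg (t - c)) + (\<Sum>t\<in>UNIV. leg t * leg (t - c))"
    by (simp add: sum.distrib distrib_left mult.commute)
  also have "(\<Sum>t\<in>UNIV. leg t * leg (t - c)) = (\<Sum>t\<in>UNIV. leg (t * (t - c)))"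
    by (simp add: leg_mult)
  also have "(\<Sum>t\<in>UNIV. leg (t - c)) = 0" using sum_leg_add[of "-c"] by simp
  also have "(\<Sum>t\<in>UNIV. leg (t * (t - c))) = (\<Sum>t\<in>UNIV - {0}. leg (t * (t - c)))"
    by (rule sum.mono_neutral_right) (auto simp: leg_def)
  also have "\<dots> = (\<Sum>t\<in>UNIV - {0}. leg (1 - c / t))"
  proof (rule sum.cong)
    fix t assume "t \<in> (UNIV::'a set) - {0}"
    hence t: "t \<noteq> 0" by simp
    have "t * (t - c) = t^2 * (1 - c / t)" using t by (simp add: field_simps power2_eq_square)
    thus "leg (t * (t - c)) = leg (1 - c / t)" using leg_sq_mult t by simp
  qed simp
  also have "\<dots> = (\<Sum>u\<in>UNIV - {1}. leg (u::'a))"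
    by (rule sum.reindex_bij_witness[of _ "\<lambda>u. c / (1 - u)" "\<lambda>t. 1 - c / t"]) (use c in \<open>auto simp: field_simps\<close>)
  also have "\<dots> = (\<Sum>u\<in>UNIV. leg (u::'a)) - leg (1::'a)"
    by (simp add: sum_diff1)
  also have "\<dots> = -1" using sum_leg leg_one by simp
  finally show ?thesis by simp
qed

lemma leg_pm: "(x::'a) \<noteq> 0 \<Longrightarrow> leg x = 1 \<or> leg x = -1" by (simp add: leg_def)

lemma indic: "x \<in> {-1,1} \<Longrightarrow> y \<in> {-1,1} \<Longrightarrow> n \<in> {-1,1} \<Longrightarrow>
   (1 - n*x)*(1 - n*y) = (if x = -n \<and> y = -n then 4 else (0::int))"
  by auto

lemma card_A: assumes l: "(l::'a) \<noteq> 0"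
  shows "4 * int (card (Bset l (-leg(2*l)) (-leg(2*l)))) = int CARD('a) - leg (-1::'a)"
proof -
  define n where "n = leg (2*l)"
  have l2: "2 * l \<noteq> 0" using l two_ne0[OF oddq] by simp
  have n2: "n * n = 1" using leg_sqr[of "2*l"] l2 n_def by simp
  have nn: "n \<in> {-1,1}" using leg_pm[OF l2] n_def by auto
  define I where "I b = (1 - n * leg (l - b)) * (1 - n * leg (l + b))" for b
  have I: "I b = (if b \<in> Bset l (-n) (-n) then 4 else 0)" for b
  proof (cases "b = l \<or> b = -l")
    case True
    hence "I b = 0"
    proof
      assume "b = l"
      hence e1: "l - b = 0" and e2: "l + b = 2 * l" by simp_all
      have "I b = (1 - n * leg (0::'a)) * (1 - n * leg (2 * l))" unfolding I_def e1 e2 by simp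
      thus "I b = 0" using n2 n_def by (simp add: leg_0_iff)
    next
      assume "b = -l"
      hence e1: "l + b = 0" and e2: "l - b = 2 * l" by simp_all
      have "I b = (1 - n * leg (2 * l)) * (1 - n * leg (0::'a))" unfolding I_def e1 e2 by simp
      thus "I b = 0" using n2 n_def by (simp add: leg_0_iff)
    qed
    moreover have "b \<notin> Bset l (-n) (-n)"
    proof
      assume "b \<in> Bset l (-n) (-n)"
      hence "leg (l - b) = -n" "leg (l + b) = -n" by (simp_all add: Bset_def)
      moreover have "l - b = 0 \<or> l + b = 0" using True by auto
      ultimately show False using nn by (auto simp: leg_0_iff)
    qed
    ultimately show ?thesis by simp
  next
    case False
    have "l - b \<noteq> 0" using False by auto
    moreover have "l + b \<noteq> 0"
    proof
      assume "l + b = 0" hence "b = - l" by (simp add: add_eq_0_iff)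
      thus False using False by simp
    qed
    ultimately have "leg (l - b) \<in> {-1,1}" "leg (l + b) \<in> {-1,1}" using leg_pm[of "l-b"] leg_pm[of "l+b"] by auto
    thus ?thesis unfolding I_def using indic[OF _ _ nn] by (simp add: Bset_def)
  qed
  have "(\<Sum>b\<in>UNIV. I b) = (\<Sum>b\<in>Bset l (-n) (-n). 4)"
    unfolding I by (simp add: sum.If_cases Int_def)
  hence s1: "(\<Sum>b\<in>UNIV. I b) = 4 * int (card (Bset l (-n) (-n)))" by simp
  have Ib: "I b = 1 - n * leg (l - b) - n * leg (l + b) + (n*n) * (leg (l - b) * leg (l + b))" for b
    unfolding I_def by (simp add: algebra_simps)
  have s2: "(\<Sum>b\<in>UNIV. I b) = (\<Sum>b\<in>UNIV. 1 - n * leg (l - b) - n * leg (l + b) + (n*n) * (leg (l - b) * leg (l + b)))"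
    by (simp only: Ib)
  have s3: "(\<Sum>b\<in>(UNIV::'a set). 1 - n * leg (l - b) - n * leg (l + b) + (n*n) * (leg (l - b) * leg (l + b)))
     = int CARD('a) - n * (\<Sum>b\<in>UNIV. leg (l - b)) - n * (\<Sum>b\<in>UNIV. leg (l + b))
      + (n*n) * (\<Sum>b\<in>UNIV. leg (l - b) * leg (l + b))"
    by (simp only: sum.distrib sum_subtractf sum_distrib_left[symmetric] sum_constant)
  have s4: "(\<Sum>b\<in>UNIV. leg (l - b) * leg (l + b)) = - leg (-1::'a)"
  proof -
    have "(\<Sum>b\<in>UNIV. leg (l - b) * leg (l + b)) = (\<Sum>b\<in>UNIV. leg (-1::'a) * leg (b^2 - l^2))"
    proof (rule sum.cong)
      fix b :: 'a
      have "(l - b) * (l + b) = (-1) * (b^2 - l^2)" by (simp add: algebra_simps power2_eq_square)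
      thus "leg (l - b) * leg (l + b) = leg (-1::'a) * leg (b^2 - l^2)" by (simp only: leg_mult[symmetric])
    qed simp
    also have "\<dots> = leg (-1::'a) * (\<Sum>b\<in>UNIV. leg (b^2 - l^2))" by (simp add: sum_distrib_left)
    also have "\<dots> = - leg (-1::'a)" using sum_leg_quad[of "l^2"] l by simp
    finally show ?thesis .
  qed
  have "4 * int (card (Bset l (-n) (-n))) = int CARD('a) - leg (-1::'a)"
    using s1 s2 s3 s4 sum_leg_sub[of l] sum_leg_add[of l] n2 by simp
  thus ?thesis by (simp add: n_def)
qed

end

lemma const_prod: "(\<Prod>x\<in>S. [:f x:]) = [:\<Prod>x\<in>S. f x:]"
  by (induction S rule: infinite_finite_induct) (auto simp: mult.commute)

lemma prod_M_dvd:
  fixes T :: "'b::field poly"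
  assumes "finite S" "inj_on wfn S" "\<And>a. a \<in> S \<Longrightarrow> [:-wfn a,0,1:] dvd T"
  shows "(\<Prod>a\<in>S. [:-wfn a,0,1:]) dvd T"
  using assms
proof (induction S rule: finite_induct)
  case empty thus ?case by simp
next
  case (insert a S)
  let ?M = "\<lambda>a. [:-wfn a,0,1:]"
  have injS: "inj_on wfn S" and wa: "wfn a \<notin> wfn ` S" using insert.prems(1) insert.hyps(2)
    by (auto simp: inj_on_insert)
  have "(\<Prod>a\<in>S. ?M a) dvd T" using insert.IH injS insert.prems(2) by blast
  then obtain R where R: "T = (\<Prod>a\<in>S. ?M a) * R" by (auto elim: dvdE)
  define c where "c = (\<Prod>b\<in>S. wfn a - wfn b)"
  have cong1: "[(\<Prod>b\<in>S. ?M b) = [:c:]] (mod ?M a)"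
  proof -
    have "[(\<Prod>b\<in>S. ?M b) = (\<Prod>b\<in>S. [:wfn a - wfn b:])] (mod ?M a)"
    proof (rule cong_prod)
      fix b assume "b \<in> S"
      have "?M b - [:wfn a - wfn b:] = ?M a" by simp
      thus "[?M b = [:wfn a - wfn b:]] (mod ?M a)" by (simp add: cong_iff_dvd_diff)
    qed
    thus ?thesis by (simp add: const_prod c_def)
  qed
  have c0: "c \<noteq> 0" using wa insert.hyps(1) by (auto simp: c_def)
  have "?M a dvd (\<Prod>b\<in>S. ?M b) * R" using insert.prems(2) R by simp
  moreover have "[(\<Prod>b\<in>S. ?M b) * R = [:c:] * R] (mod ?M a)" using cong1 by (rule cong_scalar_right)
  ultimately have "?M a dvd [:c:] * R" using cong_dvd_iff by blast
  hence "?M a dvd smult c R" by simp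
  hence "?M a dvd R" using c0 by (rule dvd_smult_cancel)
  then obtain R' where R': "R = ?M a * R'" by (auto elim: dvdE)
  have "T = (?M a * (\<Prod>b\<in>S. ?M b)) * R'" unfolding R R' by (simp only: ac_simps)
  moreover have "(\<Prod>b\<in>insert a S. ?M b) = ?M a * (\<Prod>b\<in>S. ?M b)"
    by (rule prod.insert[OF insert.hyps])
  ultimately show ?case by (metis dvd_triv_left)
qed

lemma eq_smult_of_dvd:
  fixes T Mp :: "'b::field poly"
  assumes "Mp dvd T" "T \<noteq> 0" "degree T \<le> degree Mp" "lead_coeff Mp = 1"
  shows "T = smult (coeff T (degree Mp)) Mp"
proof -
  obtain R where R: "T = Mp * R" using assms(1) by (auto elim: dvdE)
  have "Mp \<noteq> 0" "R \<noteq> 0" using assms(2) R by auto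
  hence "degree T = degree Mp + degree R" using R degree_mult_eq by simp
  hence "degree R = 0" using assms(3) by simp
  hence "[:coeff R 0:] = R" by (rule degree_0_id)
  hence "T = Mp * [:coeff R 0:]" using R by simp
  hence T2: "T = smult (coeff R 0) Mp" by simp
  hence "coeff T (degree Mp) = coeff R 0 * lead_coeff Mp" by simp
  hence c: "coeff R 0 = coeff T (degree Mp)" using assms(4) by simp
  show ?thesis using T2 unfolding c .
qed

lemma coeff_T:
  "coeff ([:l,1:]^n + [:l,-1:]^n) j = (if j \<le> n then of_nat (n choose j) * l^(n-j) * (1 + (-1)^j) else (0::'b::comm_ring_1))"
proof (cases "j \<le> n")
  case True thus ?thesis by (simp add: coeff_linear_poly_power algebra_simps)
next
  case False
  have "degree ([:l,1:]^n + [:l,-1:]^n) \<le> n"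
    by (intro degree_add_le order.trans[OF degree_power_le]) auto
  thus ?thesis using False coeff_eq_0[of "[:l,1:]^n + [:l,-1:]^n" j] by (simp del: coeff_add)
qed

context
  assumes "SORT_CONSTRAINT('a::{finite,field})"
  assumes oddq: "odd (CARD('a))"
begin

lemma frob: "[:l, 1:] ^ CARD('a) = monom 1 (CARD('a)) + [:l::'a:]"
proof (rule poly_eqI_degree_lead_coeff[where n="CARD('a)" and A=UNIV])
  have "coeff [:l:] CARD('a) = 0" using card_ge3[OF oddq] by (intro coeff_eq_0) auto
  thus "coeff ([:l, 1:] ^ CARD('a)) CARD('a) = coeff (monom 1 CARD('a) + [:l:]) CARD('a)"
    by (simp add: coeff_linear_power)
  show "CARD('a) \<le> card (UNIV::'a set)" by simp
  show "degree ([:l, 1:] ^ CARD('a)) \<le> CARD('a)" by (simp add: degree_linear_power)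
  show "degree (monom 1 CARD('a) + [:l:]) \<le> CARD('a)" by (intro degree_add_le) (auto simp: degree_monom_le)
  fix z :: 'a
  show "poly ([:l, 1:] ^ CARD('a)) z = poly (monom 1 CARD('a) + [:l:]) z"
    using fermat'[OF oddq, of "l+z"] fermat'[OF oddq, of z] by (simp add: poly_monom add.commute)
qed

lemma dvd_T:
  fixes w l :: 'a
  assumes hdef: "h = (CARD('a) - 1) div 2"
  assumes w: "\<not> is_square w" and N: "\<not> is_square (l^2 - w)"
  shows "[:-w,0,1:] dvd ([:l,1:]^(h+1) + [:l,-1:]^(h+1))"
proof -
  let ?M = "[:-w,0,1:] :: 'a poly"
  let ?X = "[:0,1:] :: 'a poly"
  have q: "CARD('a) = 2*h+1" using card_eq_h[OF oddq] hdef by simp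
  have "leg w = -1" using w leg_m1_iff[OF oddq] by simp
  hence wh: "w ^ h = -1" using euler[OF oddq, of w] hdef by simp
  have "leg (l^2 - w) = -1" using N leg_m1_iff[OF oddq] by simp
  hence Nh: "(l^2 - w) ^ h = -1" using euler[OF oddq, of "l^2 - w"] hdef by simp
  have c1: "[?X^2 = [:w:]] (mod ?M)"
    by (simp add: cong_iff_dvd_diff power2_eq_square)
  have c2: "[?X^(2*h) = [:-1:]] (mod ?M)"
  proof -
    have "[(?X^2)^h = [:w:]^h] (mod ?M)" by (rule cong_pow[OF c1])
    thus ?thesis by (simp add: power_mult poly_const_pow wh)
  qed
  have c3: "[?X^CARD('a) = [:0,-1:]] (mod ?M)"
  proof -
    have "[?X * ?X^(2*h) = ?X * [:-1:]] (mod ?M)" by (rule cong_scalar_left[OF c2])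
    thus ?thesis by (simp add: q)
  qed
  have xm: "monom (1::'a) (CARD('a)) = ?X ^ CARD('a)" by (simp add: monom_altdef)
  have c4: "[[:l,1:]^CARD('a) = [:l,-1:]] (mod ?M)"
  proof -
    have A: "[?X^CARD('a) + [:l:] = [:0,-1:] + [:l:]] (mod ?M)" using cong_add[OF c3 cong_refl] .
    have B: "[:0,-1:] + [:l:] = [:l,-1:]" by simp
    have f: "[:l,1:]^CARD('a) = ?X^CARD('a) + [:l:]" by (simp only: frob[of l] xm)
    show ?thesis unfolding f using A unfolding B .
  qed
  have c5: "[[:l,-1:] * [:l,1:] = [:l^2 - w:]] (mod ?M)"
  proof -
    have e: "[:l,-1:] * [:l,1:] = [:l^2:] - ?X^2" by (simp add: power2_eq_square)
    have "[[:l^2:] - ?X^2 = [:l^2:] - [:w:]] (mod ?M)" by (rule cong_diff[OF cong_refl c1])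
    thus ?thesis using e by simp
  qed
  define u where "u = [:l,1:]^(h+1)"
  have c6: "[u^2 = [:l^2 - w:]] (mod ?M)"
  proof -
    have ex: "(h+1)*2 = Suc (2*h+1)" by simp
    have "u^2 = [:l,1:]^CARD('a) * [:l,1:]"
      by (simp only: u_def power_mult[symmetric] ex power_Suc q mult.commute)
    moreover have "[[:l,1:]^CARD('a) * [:l,1:] = [:l,-1:] * [:l,1:]] (mod ?M)"
      by (rule cong_scalar_right[OF c4])
    ultimately show ?thesis using cong_trans[OF _ c5] by simp
  qed
  have c7: "[[:l,-1:]^(h+1) = - u] (mod ?M)"
  proof -
    have a1: "[([:l,1:]^CARD('a))^(h+1) = [:l,-1:]^(h+1)] (mod ?M)" by (rule cong_pow[OF c4])
    have a2: "([:l,1:]^CARD('a))^(h+1) = u ^ CARD('a)"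
      by (simp only: u_def power_mult[symmetric] mult.commute)
    have a3: "u ^ CARD('a) = u * (u^2)^h" by (simp add: q power_mult[symmetric])
    have a4: "[u * (u^2)^h = u * [:l^2-w:]^h] (mod ?M)" by (intro cong_scalar_left cong_pow c6)
    have a5: "u * [:l^2-w:]^h = - u" by (simp add: poly_const_pow Nh)
    have "[[:l,-1:]^(h+1) = u * (u^2)^h] (mod ?M)" using cong_sym[OF a1] a2 a3 by simp
    from cong_trans[OF this a4] show ?thesis unfolding a5 .
  qed
  have "[u + [:l,-1:]^(h+1) = u + - u] (mod ?M)" by (rule cong_add[OF cong_refl c7])
  thus ?thesis by (simp add: u_def cong_0_iff)
qed

end

definition nuF :: "'a::{finite,field} \<Rightarrow> 'a" where "nuF l = of_int (leg (2*l))"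
definition kF :: "'a::{finite,field} \<Rightarrow> 'a" where "kF l = 2 * nuF l / l"
definition piF :: "'a::{finite,field} \<Rightarrow> 'a \<Rightarrow> 'a" where "piF l b = kF l * b^2 - nuF l * l"

context
  assumes "SORT_CONSTRAINT('a::{finite,field})"
  assumes oddq: "odd (CARD('a))"
begin

lemma n_pm: "(l::'a) \<noteq> 0 \<Longrightarrow> leg (2*l) = 1 \<or> leg (2*l) = -1"
  using leg_pm[OF oddq, of "2*l"] two_ne0[OF oddq] by simp

lemma nu_sq: "(l::'a) \<noteq> 0 \<Longrightarrow> nuF l * nuF l = 1"
  using n_pm[of l] by (auto simp: nuF_def)

lemma nu_ne0: "(l::'a) \<noteq> 0 \<Longrightarrow> nuF l \<noteq> 0"
  using nu_sq[of l] by auto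

lemma k_ne0: "(l::'a) \<noteq> 0 \<Longrightarrow> kF l \<noteq> 0"
  using nu_ne0[of l] two_ne0[OF oddq] by (simp add: kF_def)

lemma leg_scale: assumes "(d::'a) \<noteq> 0" shows "leg ((1/d)^2 * x) = leg x"
  using leg_sq_mult[OF oddq, of "1/d" x] assms by simp

lemma pi_sign:
  fixes l c :: 'a
  assumes l: "l \<noteq> 0" and cc: "leg (l - c) * leg (l + c) = -1"
  shows "leg (l - piF l c) = -1 \<and> leg (l + piF l c) = 1"
proof -
  have c0: "c \<noteq> 0" using cc leg_sqr[OF oddq, of l] l by auto
  have c2: "leg (c^2) = 1" using leg_sq[OF oddq c0] .
  have lc: "leg ((l - c) * (l + c)) = -1" using cc by (simp add: leg_mult[OF oddq])
  from n_pm[OF l] show ?thesis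
  proof
    assume n: "leg (2*l) = 1"
    hence nu: "nuF l = 1" by (simp add: nuF_def)
    have e1: "l - piF l c = (1/l)^2 * ((2*l) * ((l - c) * (l + c)))"
      using l by (simp add: piF_def kF_def nu field_simps power2_eq_square)
    have e2: "l + piF l c = (1/l)^2 * ((2*l) * c^2)"
      using l by (simp add: piF_def kF_def nu field_simps power2_eq_square)
    show ?thesis unfolding e1 e2 leg_scale[OF l] leg_mult[OF oddq, of "2*l"] n lc c2 by simp
  next
    assume n: "leg (2*l) = -1"
    hence nu: "nuF l = -1" by (simp add: nuF_def)
    have e1: "l - piF l c = (1/l)^2 * ((2*l) * c^2)"
      using l by (simp add: piF_def kF_def nu field_simps power2_eq_square)
    have e2: "l + piF l c = (1/l)^2 * ((2*l) * ((l - c) * (l + c)))"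
      using l by (simp add: piF_def kF_def nu field_simps power2_eq_square)
    show ?thesis unfolding e1 e2 leg_scale[OF l] leg_mult[OF oddq, of "2*l"] n lc c2 by simp
  qed
qed

lemma pi_sq_eq: assumes l: "(l::'a) \<noteq> 0" and "piF l c = piF l c'" shows "c' = c \<or> c' = - c"
proof -
  have "kF l * c^2 = kF l * c'^2" using assms(2) by (simp add: piF_def)
  hence "c'^2 = c^2" using k_ne0[OF l] by simp
  thus ?thesis by (metis power2_eq_iff)
qed

lemma pi_bij: assumes l: "(l::'a) \<noteq> 0" shows "bij_betw (piF l) (Bset l (-1) 1) (Bset l (-1) 1)"
proof -
  let ?B = "Bset l (-1) 1"
  have map: "piF l ` ?B \<subseteq> ?B"
  proof
    fix b assume "b \<in> piF l ` ?B"
    then obtain c where c: "c \<in> ?B" "b = piF l c" by auto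
    hence "leg (l - c) * leg (l + c) = -1" by (simp add: Bset_def)
    thus "b \<in> ?B" using pi_sign[OF l] c by (simp add: Bset_def)
  qed
  have inj: "inj_on (piF l) ?B"
  proof
    fix c c' assume c: "c \<in> ?B" and c': "c' \<in> ?B" and e: "piF l c = piF l c'"
    from pi_sq_eq[OF l e] show "c = c'"
    proof
      assume "c' = -c"
      thus ?thesis using c c' by (simp add: Bset_def)
    qed simp
  qed
  show ?thesis unfolding bij_betw_def using inj endo_inj_surj[OF _ map inj] by simp
qed

lemma sig_bij: assumes l: "(l::'a) \<noteq> 0" shows "bij_betw (\<lambda>b. - piF l b) (Bset l 1 (-1)) (Bset l 1 (-1))"
proof -
  let ?B = "Bset l 1 (-1)"
  have map: "(\<lambda>b. - piF l b) ` ?B \<subseteq> ?B"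
  proof
    fix b assume "b \<in> (\<lambda>b. - piF l b) ` ?B"
    then obtain c where c: "c \<in> ?B" "b = - piF l c" by auto
    hence "leg (l - c) * leg (l + c) = -1" by (simp add: Bset_def)
    thus "b \<in> ?B" using pi_sign[OF l] c by (simp add: Bset_def)
  qed
  have inj: "inj_on (\<lambda>b. - piF l b) ?B"
  proof
    fix c c' assume c: "c \<in> ?B" and c': "c' \<in> ?B" and e: "- piF l c = - piF l c'"
    from pi_sq_eq[OF l] e have "c' = c \<or> c' = -c" by simp
    thus "c = c'"
    proof
      assume "c' = -c"
      thus ?thesis using c c' by (simp add: Bset_def)
    qed simp
  qed
  show ?thesis unfolding bij_betw_def using inj endo_inj_surj[OF _ map inj] by simp
qed

lemma pi_inv: assumes l: "(l::'a) \<noteq> 0" and b: "b \<in> Bset l (-1) 1"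
  shows "inv_into (Bset l (-1) 1) (piF l) b \<in> Bset l (-1) 1 \<and> piF l (inv_into (Bset l (-1) 1) (piF l) b) = b"
  using pi_bij[OF l] b by (metis bij_betw_def inv_into_into f_inv_into_f)

lemma sig_inv: assumes l: "(l::'a) \<noteq> 0" and b: "b \<in> Bset l 1 (-1)"
  shows "inv_into (Bset l 1 (-1)) (\<lambda>b. - piF l b) b \<in> Bset l 1 (-1) \<and> - piF l (inv_into (Bset l 1 (-1)) (\<lambda>b. - piF l b) b) = b"
proof -
  have "b \<in> (\<lambda>b. - piF l b) ` Bset l 1 (-1)" using sig_bij[OF l] b by (simp add: bij_betw_def)
  from inv_into_into[OF this] f_inv_into_f[OF this] show ?thesis by simp
qed

lemma c_sq: assumes l: "(l::'a) \<noteq> 0" and b: "piF l c = b"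
  shows "c^2 = (l * nuF l * b + l^2) / 2"
proof -
  have H: "l * b = nuF l * (2 * c^2) - nuF l * l^2"
    using l b by (simp add: piF_def kF_def field_simps power2_eq_square)
  have "l * nuF l * b = nuF l * (l * b)" by (simp add: ac_simps)
  also have "\<dots> = nuF l * (nuF l * (2 * c^2) - nuF l * l^2)" by (simp only: H)
  also have "\<dots> = (nuF l * nuF l) * (2 * c^2 - l^2)" by (simp add: algebra_simps)
  finally have "l * nuF l * b = 2 * c^2 - l^2" using nu_sq[OF l] by simp
  thus ?thesis using two_ne0[OF oddq] by (simp add: field_simps)
qed

lemma c_sq': assumes l: "(l::'a) \<noteq> 0" and b: "- piF l c = b"
  shows "c^2 = (- l * nuF l * b + l^2) / 2"
proof -
  have "piF l c = - b" using b by (metis minus_minus)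
  from c_sq[OF l this] show ?thesis by simp
qed

lemma sq_iff_leg: "(x::'a) \<noteq> 0 \<Longrightarrow> is_square x \<longleftrightarrow> leg x = 1"
  by (simp add: leg_1_iff[OF oddq])

end

definition AF :: "'a::{finite,field} \<Rightarrow> 'a set" where "AF l = Bset l (-leg(2*l)) (-leg(2*l))"
definition wF :: "'a::{finite,field} \<Rightarrow> 'a \<Rightarrow> 'a" where "wF l a = (a + nuF l * l) / kF l"
definition TF :: "'a::{finite,field} \<Rightarrow> nat \<Rightarrow> 'a poly" where "TF l h = [:l,1:]^(h+1) + [:l,-1:]^(h+1)"
definition MF :: "'a::{finite,field} \<Rightarrow> 'a poly" where "MF l = (\<Prod>a\<in>AF l. [:-wF l a,0,1:])"

context
  assumes "SORT_CONSTRAINT('a::{finite,field})"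
  assumes oddq: "odd (CARD('a))"
begin

lemma card_AF: assumes l: "(l::'a) \<noteq> 0"
  shows "card (AF l) = mval TYPE('a)" "4 * int (mval TYPE('a)) = int CARD('a) - leg (-1::'a)" "mval TYPE('a) \<ge> 1"
proof -
  have c: "4 * int (card (AF l)) = int CARD('a) - leg (-1::'a)" using card_A[OF oddq l] by (simp add: AF_def)
  thus "card (AF l) = mval TYPE('a)" unfolding mval_def by simp
  thus "4 * int (mval TYPE('a)) = int CARD('a) - leg (-1::'a)" using c by simp
  have "leg (-1::'a) \<le> 1" using leg_cases[OF oddq, of "-1::'a"] by auto
  hence "4 * int (card (AF l)) \<ge> 2" using c card_ge3[OF oddq] by linarith
  thus "mval TYPE('a) \<ge> 1" using \<open>card (AF l) = mval TYPE('a)\<close> by simp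
qed

lemma A_sym: "a \<in> AF (l::'a) \<Longrightarrow> -a \<in> AF l"
  by (simp add: AF_def Bset_def)

lemma prod_A_neg: "(\<Prod>a\<in>AF (l::'a). f (-a)) = (\<Prod>a\<in>AF l. f a)"
  by (rule prod.reindex_bij_witness[where i=uminus and j=uminus]) (auto intro: A_sym)

lemma wns: assumes l: "(l::'a) \<noteq> 0" and a: "a \<in> AF l"
  shows "\<not> is_square (wF l a) \<and> \<not> is_square (l^2 - wF l a)"
proof -
  have h2: "(2::'a) \<noteq> 0" by (rule two_ne0[OF oddq])
  have h4: "(4::'a) \<noteq> 0" using h2 by (metis mult_2 numeral_Bit0 one_add_one mult_eq_0_iff distrib_left mult_1_right)
  have sc: "leg ((1/2)^2 * x) = leg x" for x :: 'a using leg_scale[OF oddq h2] .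
  have ns: "\<not> is_square x" if "leg x = -1" for x :: 'a using that leg_m1_iff[OF oddq] by simp
  from n_pm[OF oddq l] show ?thesis
  proof
    assume n: "leg (2*l) = 1"
    hence nu: "nuF l = 1" by (simp add: nuF_def)
    have la: "leg (l - a) = -1" "leg (l + a) = -1" using a n by (simp_all add: AF_def Bset_def)
    have e1: "wF l a = (1/2)^2 * ((2*l) * (l + a))"
      using l h2 h4 by (simp add: wF_def kF_def nu field_simps power2_eq_square)
    have e2: "l^2 - wF l a = (1/2)^2 * ((2*l) * (l - a))"
      using l h2 h4 by (simp add: wF_def kF_def nu field_simps power2_eq_square)
    have L1: "leg (wF l a) = leg (2*l) * leg (l + a)" unfolding e1 sc by (rule leg_mult[OF oddq])
    have L2: "leg (l^2 - wF l a) = leg (2*l) * leg (l - a)" unfolding e2 sc by (rule leg_mult[OF oddq])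
    show ?thesis using ns L1 L2 la n by simp
  next
    assume n: "leg (2*l) = -1"
    hence nu: "nuF l = -1" by (simp add: nuF_def)
    have la: "leg (l - a) = 1" "leg (l + a) = 1" using a n by (simp_all add: AF_def Bset_def)
    have e1: "wF l a = (1/2)^2 * ((2*l) * (l - a))"
      using l h2 h4 by (simp add: wF_def kF_def nu field_simps power2_eq_square)
    have e2: "l^2 - wF l a = (1/2)^2 * ((2*l) * (l + a))"
      using l h2 h4 by (simp add: wF_def kF_def nu field_simps power2_eq_square)
    have L1: "leg (wF l a) = leg (2*l) * leg (l - a)" unfolding e1 sc by (rule leg_mult[OF oddq])
    have L2: "leg (l^2 - wF l a) = leg (2*l) * leg (l + a)" unfolding e2 sc by (rule leg_mult[OF oddq])
    show ?thesis using ns L1 L2 la n by simp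
  qed
qed

lemma MF_dvd: assumes l: "(l::'a) \<noteq> 0" and hdef: "h = (CARD('a) - 1) div 2"
  shows "MF l dvd TF l h"
  unfolding MF_def
proof (rule prod_M_dvd)
  show "finite (AF l)" by simp
  show "inj_on (wF l) (AF l)" using k_ne0[OF oddq l] by (auto simp: inj_on_def wF_def)
  fix a assume "a \<in> AF l"
  from wns[OF l this] show "[:- wF l a, 0, 1:] dvd TF l h"
    unfolding TF_def by (intro dvd_T[OF oddq hdef]) auto
qed

lemma MF_deg: "degree (MF (l::'a)) = 2 * card (AF l)" "lead_coeff (MF l) = 1"
proof -
  have "degree (MF l) = (\<Sum>a\<in>AF l. degree [:-wF l a,0,1:])"
    unfolding MF_def by (rule degree_prod_sum_eq) simp
  thus "degree (MF (l::'a)) = 2 * card (AF l)" by simp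
  have "lead_coeff (MF l) = (\<Prod>a\<in>AF l. lead_coeff [:-wF l a,0,1:])"
    unfolding MF_def by (rule lead_coeff_prod)
  thus "lead_coeff (MF l) = 1" by simp
qed

lemma leg_k: assumes l: "(l::'a) \<noteq> 0" shows "leg (kF l) = leg (2*l) * leg (nuF l)"
proof -
  have e: "kF l = (1/l)^2 * ((2*l) * nuF l)" using l by (simp add: kF_def field_simps power2_eq_square)
  have "leg (kF l) = leg ((2*l) * nuF l)" by (simp only: e leg_scale[OF oddq l])
  thus ?thesis by (simp only: leg_mult[OF oddq])
qed

lemma eps_h: assumes hdef: "h = (CARD('a) - 1) div 2"
  shows "(of_int (leg (-1::'a)) :: 'a) = (-1)^h"
  using euler[OF oddq, of "-1::'a"] hdef by simp

lemma key: assumes l: "(l::'a) \<noteq> 0" and hdef: "h = (CARD('a) - 1) div 2"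
  shows "TF l h = smult (2 * kF l ^ (2 * mval TYPE('a) - 1)) (MF l)"
proof -
  define m where "m = mval TYPE('a)"
  define k where "k = kF l"
  have q: "CARD('a) = 2*h+1" using card_eq_h[OF oddq] hdef by simp
  have m4: "4 * int m = int (2*h+1) - leg (-1::'a)" using card_AF(2)[OF l] q m_def by simp
  have dM: "degree (MF l) = 2 * m" using MF_deg(1) card_AF(1)[OF l] m_def by simp
  have hp: "h \<ge> 1" using h_pos[OF oddq] hdef by simp
  have kh: "k ^ h = of_int (leg k)" using euler[OF oddq, of k] hdef by simp
  have lk: "leg k = leg (2*l) * leg (nuF l)" using leg_k[OF l] k_def by simp
  have h2: "(2::'a) \<noteq> 0" by (rule two_ne0[OF oddq])
  have k0: "k \<noteq> 0" using k_ne0[OF oddq l] k_def by simp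
  have cT: "coeff (TF l h) j = (if j \<le> h+1 then of_nat ((h+1) choose j) * l^(h+1-j) * (1 + (-1)^j) else 0)" for j
    unfolding TF_def by (rule coeff_T)
  have main: "degree (TF l h) \<le> 2*m \<and> coeff (TF l h) (2*m) = 2 * k ^ (2*m - 1)"
  proof (cases "even h")
    case True
    have E: "(of_int (leg (-1::'a)) :: 'a) = of_int 1" using eps_h[OF hdef] True by simp
    have eps: "leg (-1::'a) = 1" using of_int_inj3[OF oddq _ _ E] leg_cases[OF oddq, of "-1::'a"] by simp
    hence hm: "h = 2*m" using m4 by simp
    have lnu: "leg (nuF l) = 1" using n_pm[OF oddq l] eps by (auto simp: nuF_def leg_one[OF oddq])
    have khv: "k ^ h = nuF l" using kh lk lnu by (simp add: nuF_def)
    have "degree (TF l h) \<le> h"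
    proof (rule degree_le, intro allI impI)
      fix i assume "h < i"
      show "coeff (TF l h) i = 0"
      proof (cases "i = h+1")
        case True thus ?thesis using \<open>even h\<close> by (simp add: cT)
      qed (use \<open>h < i\<close> in \<open>simp add: cT\<close>)
    qed
    moreover have "coeff (TF l h) h = of_nat (h+1) * 2 * l" using True by (simp add: cT)
    moreover have "(of_nat (h+1) * 2 :: 'a) = 1"
    proof -
      have "(of_nat (h+1) * 2 :: 'a) = of_nat CARD('a) + 1" by (simp add: q algebra_simps)
      thus ?thesis using of_nat_card[OF oddq] by simp
    qed
    moreover have "2 * k ^ (h - 1) = l"
    proof -
      have "k * k ^ (h - 1) = nuF l" using khv hp by (metis Suc_diff_1 power_Suc less_le_trans zero_less_one)
      hence kk: "k ^ (h - 1) = nuF l / k" using k0 by (simp add: field_simps)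
      have "2 * (nuF l / k) = l" using l h2 nu_ne0[OF oddq l] by (simp add: k_def kF_def field_simps)
      thus ?thesis using kk by simp
    qed
    ultimately show ?thesis using hm by simp
  next
    case False
    have E: "(of_int (leg (-1::'a)) :: 'a) = of_int (-1)" using eps_h[OF hdef] False by simp
    have eps: "leg (-1::'a) = -1" using of_int_inj3[OF oddq _ _ E] leg_cases[OF oddq, of "-1::'a"] by simp
    hence hm: "h + 1 = 2*m" using m4 by simp
    have "leg k = 1" using n_pm[OF oddq l] eps lk by (auto simp: nuF_def leg_one[OF oddq])
    hence khv: "k ^ h = 1" using kh by simp
    have "degree (TF l h) \<le> h + 1"
      by (rule degree_le) (simp add: cT)
    moreover have "coeff (TF l h) (h+1) = 2" using False by (simp add: cT)
    ultimately show ?thesis using khv by (simp add: hm[symmetric])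
  qed
  have T0: "TF l h \<noteq> 0"
  proof
    assume "TF l h = 0"
    hence "k ^ (2*m - 1) = 0" using main h2 by simp
    thus False using k0 by simp
  qed
  have "TF l h = smult (coeff (TF l h) (degree (MF l))) (MF l)"
  proof (rule eq_smult_of_dvd[OF MF_dvd[OF l hdef] T0])
    show "degree (TF l h) \<le> degree (MF l)" using main dM by simp
    show "lead_coeff (MF l) = 1" by (rule MF_deg(2))
  qed
  thus ?thesis using main dM by (simp add: k_def m_def)
qed

lemma polyT: assumes l: "(l::'a) \<noteq> 0" and hdef: "h = (CARD('a) - 1) div 2"
  shows "(l + y)^(h+1) + (l - y)^(h+1) = 2 * kF l ^ (2 * mval TYPE('a) - 1) * (\<Prod>a\<in>AF l. y^2 - wF l a)"
proof -
  have "poly (TF l h) y = poly (smult (2 * kF l ^ (2 * mval TYPE('a) - 1)) (MF l)) y"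
    using key[OF l hdef] by simp
  moreover have "poly (TF l h) y = (l + y)^(h+1) + (l - y)^(h+1)" by (simp add: TF_def algebra_simps)
  moreover have "poly (MF l) y = (\<Prod>a\<in>AF l. y^2 - wF l a)"
    by (simp add: MF_def poly_prod power2_eq_square)
  ultimately show ?thesis by simp
qed

end

context
  assumes "SORT_CONSTRAINT('a::{finite,field})"
  assumes oddq: "odd (CARD('a))"
begin

lemma pw_leg: "(x::'a) ^ ((CARD('a) - 1) div 2) = of_int (leg x)"
  using euler[OF oddq, of x] by simp

lemma prod_pi: assumes l: "(l::'a) \<noteq> 0" and c: "c \<in> Bset l (-1) 1"
  shows "c = kF l ^ (mval TYPE('a) - 1) * (\<Prod>a\<in>AF l. piF l c - a)"
proof -
  define h where "h = (CARD('a) - 1) div 2"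
  define m where "m = mval TYPE('a)"
  define k where "k = kF l"
  define P where "P = (\<Prod>a\<in>AF l. c^2 - wF l a)"
  have m1: "m \<ge> 1" using card_AF(3)[OF oddq l] m_def by simp
  have k0: "k \<noteq> 0" using k_ne0[OF oddq l] k_def by simp
  have lc: "leg (l + c) = 1" "leg (l - c) = -1" using c by (simp_all add: Bset_def)
  have e1: "(l + c) ^ h = 1" using pw_leg[of "l+c"] lc h_def by simp
  have e2: "(l - c) ^ h = -1" using pw_leg[of "l-c"] lc h_def by simp
  have "(l + c)^(h+1) + (l - c)^(h+1) = 2 * c" using e1 e2 by simp
  hence "2 * c = 2 * (k ^ (2*m - 1) * P)" using polyT[OF oddq l h_def, of c] by (simp add: k_def m_def P_def)
  hence cP: "c = k ^ (2*m - 1) * P" using two_ne0[OF oddq] by simp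
  have "(\<Prod>a\<in>AF l. piF l c - a) = (\<Prod>a\<in>AF l. k * (c^2 - wF l a))"
    by (rule prod.cong) (use k0 in \<open>simp_all add: piF_def wF_def k_def field_simps\<close>)
  also have "\<dots> = k ^ m * P" by (simp add: prod.distrib P_def card_AF(1)[OF oddq l] m_def)
  finally have "(\<Prod>a\<in>AF l. piF l c - a) = k ^ m * P" .
  moreover have "k ^ (2*m - 1) = k ^ (m - 1) * k ^ m"
  proof -
    have "2*m - 1 = (m - 1) + m" using m1 by simp
    thus ?thesis by (simp only: power_add)
  qed
  ultimately show ?thesis using cP by (simp add: k_def m_def mult.assoc)
qed

lemma leg2: assumes l: "(l::'a) \<noteq> 0" shows "(of_int (leg (2::'a)) :: 'a) = (-1) ^ mval TYPE('a)"
proof -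
  define h where "h = (CARD('a) - 1) div 2"
  define m where "m = mval TYPE('a)"
  define K where "K = kF l ^ (2 * m - 1)"
  define W where "W = (\<Prod>a\<in>AF l. wF l a)"
  define L where "L = (of_int (leg l) :: 'a)"
  define E where "E = (of_int (leg (2::'a)) :: 'a)"
  define s where "s = ((-1::'a) ^ m)"
  have h2: "(2::'a) \<noteq> 0" by (rule two_ne0[OF oddq])
  have l2: "2 * l \<noteq> 0" using l h2 by simp
  have "leg l * leg l = 1" using leg_sqr[OF oddq, of l] l by simp
  hence LL0: "of_int (leg l * leg l) = (1::'a)" by simp
  have LL: "L * L = 1" unfolding L_def using LL0 by (simp only: of_int_mult)
  have "s * s = ((-1) * (-1::'a)) ^ m" unfolding s_def by (simp only: power_mult_distrib)
  hence ss: "s * s = 1" by simp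
  have nu: "nuF l = E * L" by (simp add: nuF_def E_def L_def leg_mult[OF oddq])
  have lh: "l ^ h = L" using pw_leg[of l] h_def L_def by simp
  have A0: "l^(h+1) + l^(h+1) = 2 * K * (\<Prod>a\<in>AF l. 0^2 - wF l a)"
    using polyT[OF oddq l h_def, of 0] by (simp add: K_def m_def)
  have "(\<Prod>a\<in>AF l. 0^2 - wF l a) = (\<Prod>a\<in>AF l. (-1) * wF l a)" by simp
  also have "\<dots> = s * W" by (simp only: prod.distrib prod_constant W_def card_AF(1)[OF oddq l] m_def s_def)
  finally have A0': "(\<Prod>a\<in>AF l. 0^2 - wF l a) = s * W" .
  have "2 * l * L = l^(h+1) + l^(h+1)" by (simp add: lh algebra_simps)
  also have "\<dots> = 2 * K * (\<Prod>a\<in>AF l. 0^2 - wF l a)" by (rule A0)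
  also have "\<dots> = 2 * K * (s * W)" by (simp only: A0')
  finally have A1: "2 * l * L = 2 * K * (s * W)" .
  have B0: "(l + l)^(h+1) + (l - l)^(h+1) = 2 * K * (\<Prod>a\<in>AF l. l^2 - wF l a)"
    using polyT[OF oddq l h_def, of l] by (simp add: K_def m_def)
  have k0: "kF l \<noteq> 0" by (rule k_ne0[OF oddq l])
  have kl: "kF l * l^2 = 2 * nuF l * l" using l by (simp add: kF_def power2_eq_square)
  have lw: "l^2 - wF l a = wF l (-a)" for a
  proof -
    have "l^2 - wF l a = (kF l * l^2 - (a + nuF l * l)) / kF l" using k0 by (simp add: wF_def field_simps)
    also have "\<dots> = (2 * nuF l * l - (a + nuF l * l)) / kF l" by (simp only: kl)
    also have "\<dots> = wF l (-a)" by (simp add: wF_def algebra_simps)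
    finally show ?thesis .
  qed
  have "(\<Prod>a\<in>AF l. l^2 - wF l a) = (\<Prod>a\<in>AF l. wF l (-a))" by (simp only: lw)
  also have "\<dots> = W" unfolding W_def by (rule prod_A_neg[OF oddq])
  finally have BW: "(\<Prod>a\<in>AF l. l^2 - wF l a) = W" .
  have l2h: "(2 * l) ^ h = nuF l" using pw_leg[of "2*l"] h_def by (simp add: nuF_def)
  have ll: "l + l = 2 * l" by simp
  have "(l + l)^(h+1) = (2 * l) ^ h * (2 * l)" unfolding ll by (simp only: power_add power_one_right)
  hence p1: "(l + l)^(h+1) = nuF l * (2 * l)" by (simp only: l2h)
  have p2: "(l - l)^(h+1) = 0" by simp
  have "2 * l * nuF l = (l + l)^(h+1) + (l - l)^(h+1)" unfolding p1 p2 by (simp only: ac_simps add_0_right add_0_left)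
  also have "\<dots> = 2 * K * (\<Prod>a\<in>AF l. l^2 - wF l a)" by (rule B0)
  also have "\<dots> = 2 * K * W" by (simp only: BW)
  finally have B1: "2 * l * nuF l = 2 * K * W" .
  have "2 * l * L = s * (2 * K * W)" using A1 by (simp only: ac_simps)
  also have "\<dots> = s * (2 * l * nuF l)" by (simp only: B1)
  also have "\<dots> = (2 * l) * (s * nuF l)" by (simp only: ac_simps)
  finally have "(2 * l) * L = (2 * l) * (s * nuF l)" .
  hence "L = s * nuF l" using l2 by simp
  hence "L = s * (E * L)" by (simp only: nu)
  hence "L * L = (s * E) * (L * L)" by (simp only: ac_simps)
  hence sE: "s * E = 1" using LL by simp
  have "E = (s * s) * E" using ss by simp
  also have "\<dots> = s * (s * E)" by (simp only: ac_simps)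
  also have "\<dots> = s" using sE by simp
  finally show ?thesis by (simp add: E_def s_def m_def)
qed

lemma prod_sig: assumes l: "(l::'a) \<noteq> 0" and c: "c \<in> Bset l 1 (-1)"
  shows "c = - of_int (leg (2::'a)) * kF l ^ (mval TYPE('a) - 1) * (\<Prod>a\<in>AF l. - piF l c - a)"
proof -
  define h where "h = (CARD('a) - 1) div 2"
  define m where "m = mval TYPE('a)"
  define k where "k = kF l"
  define P where "P = (\<Prod>a\<in>AF l. c^2 - wF l a)"
  have m1: "m \<ge> 1" using card_AF(3)[OF oddq l] m_def by simp
  have k0: "k \<noteq> 0" using k_ne0[OF oddq l] k_def by simp
  have lc: "leg (l + c) = -1" "leg (l - c) = 1" using c by (simp_all add: Bset_def)
  have e1: "(l + c) ^ h = -1" using pw_leg[of "l+c"] lc h_def by simp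
  have e2: "(l - c) ^ h = 1" using pw_leg[of "l-c"] lc h_def by simp
  have "(l + c)^(h+1) + (l - c)^(h+1) = - (2 * c)" using e1 e2 by simp
  hence "- (2 * c) = 2 * (k ^ (2*m - 1) * P)" using polyT[OF oddq l h_def, of c] by (simp add: k_def m_def P_def)
  hence H2: "2 * (k ^ (2*m - 1) * P) = - (2 * c)" by simp
  have "2 * (c + k ^ (2*m - 1) * P) = 2 * c + 2 * (k ^ (2*m - 1) * P)" by (rule distrib_left)
  also have "\<dots> = 0" using H2 by simp
  finally have "2 * (c + k ^ (2*m - 1) * P) = 0" .
  hence "c + k ^ (2*m - 1) * P = 0" using two_ne0[OF oddq] by (metis mult_eq_0_iff)
  hence cP: "c = - (k ^ (2*m - 1) * P)" by (simp add: eq_neg_iff_add_eq_0)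
  have "(\<Prod>a\<in>AF l. - piF l c - a) = (\<Prod>a\<in>AF l. - piF l c - (- a))"
    by (rule prod_A_neg[OF oddq, symmetric])
  also have "\<dots> = (\<Prod>a\<in>AF l. (-1) * (k * (c^2 - wF l a)))"
    by (rule prod.cong) (use k0 in \<open>simp_all add: piF_def wF_def k_def field_simps\<close>)
  also have "\<dots> = (-1)^m * (k ^ m * P)" by (simp only: prod.distrib prod_constant P_def card_AF(1)[OF oddq l] m_def)
  finally have PP: "(\<Prod>a\<in>AF l. - piF l c - a) = (-1)^m * (k ^ m * P)" .
  have kk: "k ^ (2*m - 1) = k ^ (m - 1) * k ^ m"
  proof -
    have "2*m - 1 = (m - 1) + m" using m1 by simp
    thus ?thesis by (simp only: power_add)
  qed
  have E: "(of_int (leg (2::'a)) :: 'a) = (-1) ^ m" using leg2[OF l] m_def by simp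
  define s where "s = ((-1::'a) ^ m)"
  have ss: "s * s = 1" unfolding s_def by (simp add: power_mult_distrib[symmetric])
  have "- of_int (leg (2::'a)) * k ^ (m - 1) * (\<Prod>a\<in>AF l. - piF l c - a)
        = - s * k ^ (m - 1) * (s * (k ^ m * P))" unfolding E PP s_def ..
  also have "\<dots> = - ((s * s) * (k ^ (m - 1) * k ^ m * P))" by (simp add: algebra_simps)
  also have "\<dots> = - (k ^ (2*m - 1) * P)" by (simp only: ss kk mult_1_left)
  also have "\<dots> = c" by (rule cP[symmetric])
  finally show ?thesis by (simp add: k_def m_def)
qed

end

context
  assumes "SORT_CONSTRAINT('a::{finite,field})"
  assumes oddq: "odd (CARD('a))"
begin

lemma pi_formula: assumes l: "(l::'a) \<noteq> 0" and b: "b \<in> Bset l (-1) 1"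
  shows "inv_into (Bset l (-1) 1) (piF l) b = kF l ^ (mval TYPE('a) - 1) * (\<Prod>a\<in>AF l. b - a)"
proof -
  define c where "c = inv_into (Bset l (-1) 1) (piF l) b"
  have cB: "c \<in> Bset l (-1) 1" and pc: "piF l c = b" using pi_inv[OF oddq l b] c_def by auto
  have X: "c = kF l ^ (mval TYPE('a) - 1) * (\<Prod>a\<in>AF l. piF l c - a)" by (rule prod_pi[OF oddq l cB])
  have Y: "c = kF l ^ (mval TYPE('a) - 1) * (\<Prod>a\<in>AF l. b - a)" using X unfolding pc .
  show ?thesis using Y unfolding c_def .
qed

lemma sig_formula: assumes l: "(l::'a) \<noteq> 0" and b: "b \<in> Bset l 1 (-1)"
  shows "inv_into (Bset l 1 (-1)) (\<lambda>b. - piF l b) b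
     = - of_int (leg (2::'a)) * kF l ^ (mval TYPE('a) - 1) * (\<Prod>a\<in>AF l. b - a)"
proof -
  define c where "c = inv_into (Bset l 1 (-1)) (\<lambda>b. - piF l b) b"
  have cB: "c \<in> Bset l 1 (-1)" and pc: "- piF l c = b" using sig_inv[OF oddq l b] c_def by auto
  have "c = - of_int (leg (2::'a)) * kF l ^ (mval TYPE('a) - 1) * (\<Prod>a\<in>AF l. - piF l c - a)"
    by (rule prod_sig[OF oddq l cB])
  hence Y: "c = - of_int (leg (2::'a)) * kF l ^ (mval TYPE('a) - 1) * (\<Prod>a\<in>AF l. b - a)" unfolding pc .
  show ?thesis using Y unfolding c_def .
qed

lemma pi_roots: assumes l: "(l::'a) \<noteq> 0" and b: "b \<in> Bset l (-1) 1"
  shows "(inv_into (Bset l (-1) 1) (piF l) b) ^ 2 = (l * nuF l * b + l^2) / 2 \<and>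
         is_square (inv_into (Bset l (-1) 1) (piF l) b + l) \<and>
         (\<forall>c'. c' ^ 2 = (l * nuF l * b + l^2) / 2 \<and> is_square (c' + l) \<longrightarrow> c' = inv_into (Bset l (-1) 1) (piF l) b)"
proof -
  define c where "c = inv_into (Bset l (-1) 1) (piF l) b"
  have cB: "c \<in> Bset l (-1) 1" and pc: "piF l c = b" using pi_inv[OF oddq l b] c_def by auto
  have lc: "leg (l + c) = 1" "leg (l - c) = -1" using cB by (simp_all add: Bset_def)
  have sq: "c ^ 2 = (l * nuF l * b + l^2) / 2" by (rule c_sq[OF oddq l pc])
  have s1: "is_square (c + l)" using lc leg_1_iff[OF oddq, of "l + c"] by (simp add: add.commute)
  have u: "c' = c" if "c' ^ 2 = (l * nuF l * b + l^2) / 2" "is_square (c' + l)" for c'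
  proof -
    have "c' ^ 2 = c ^ 2" by (simp only: that(1) sq)
    hence "c' = c \<or> c' = - c" by (metis power2_eq_iff)
    thus ?thesis
    proof
      assume "c' = - c"
      hence "is_square (l - c)" using that(2) by (simp add: add.commute)
      moreover have "\<not> is_square (l - c)" using lc leg_m1_iff[OF oddq, of "l - c"] by simp
      ultimately show ?thesis by simp
    qed simp
  qed
  show ?thesis using sq s1 u unfolding c_def by blast
qed

lemma sig_roots: assumes l: "(l::'a) \<noteq> 0" and b: "b \<in> Bset l 1 (-1)"
  shows "(inv_into (Bset l 1 (-1)) (\<lambda>b. - piF l b) b) ^ 2 = (- l * nuF l * b + l^2) / 2 \<and>
         \<not> is_square (inv_into (Bset l 1 (-1)) (\<lambda>b. - piF l b) b + l) \<and>
         (\<forall>c'. c' ^ 2 = (- l * nuF l * b + l^2) / 2 \<and> \<not> is_square (c' + l) \<longrightarrow> c' = inv_into (Bset l 1 (-1)) (\<lambda>b. - piF l b) b)"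
proof -
  define c where "c = inv_into (Bset l 1 (-1)) (\<lambda>b. - piF l b) b"
  have cB: "c \<in> Bset l 1 (-1)" and pc: "- piF l c = b" using sig_inv[OF oddq l b] c_def by auto
  have lc: "leg (l + c) = -1" "leg (l - c) = 1" using cB by (simp_all add: Bset_def)
  have sq: "c ^ 2 = (- l * nuF l * b + l^2) / 2" by (rule c_sq'[OF oddq l pc])
  have s1: "\<not> is_square (c + l)" using lc leg_m1_iff[OF oddq, of "l + c"] by (simp add: add.commute)
  have u: "c' = c" if "c' ^ 2 = (- l * nuF l * b + l^2) / 2" "\<not> is_square (c' + l)" for c'
  proof -
    have "c' ^ 2 = c ^ 2" by (simp only: that(1) sq)
    hence "c' = c \<or> c' = - c" by (metis power2_eq_iff)
    thus ?thesis
    proof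
      assume "c' = - c"
      hence "\<not> is_square (l - c)" using that(2) by (simp add: add.commute)
      moreover have "is_square (l - c)" using lc leg_1_iff[OF oddq, of "l - c"] by simp
      ultimately show ?thesis by simp
    qed simp
  qed
  show ?thesis using sq s1 u unfolding c_def by blast
qed

lemma main3: assumes l: "(l::'a) \<noteq> 0"
  shows "(let n = leg (2 * l);
           \<nu> = (of_int n :: 'a);
           m = mval TYPE('a);
           piL = (\<lambda>b. (2 * \<nu> / l) * b ^ 2 - \<nu> * l);
           sigL = (\<lambda>b. - (2 * \<nu> / l) * b ^ 2 + \<nu> * l)
       in bij_betw piL (Bset l (-1) 1) (Bset l (-1) 1) \<and>
          bij_betw sigL (Bset l 1 (-1)) (Bset l 1 (-1)) \<and>
          (\<forall>b \<in> Bset l (-1) 1.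
             inv_into (Bset l (-1) 1) piL b
               = (2 * \<nu> / l) ^ (m - 1) * (\<Prod>a \<in> Bset l (-n) (-n). b - a)) \<and>
          (\<forall>b \<in> Bset l 1 (-1).
             inv_into (Bset l 1 (-1)) sigL b
               = - of_int (leg (2::'a)) * (2 * \<nu> / l) ^ (m - 1) * (\<Prod>a \<in> Bset l (-n) (-n). b - a)) \<and>
          (\<forall>b \<in> Bset l (-1) 1.
             (let c = inv_into (Bset l (-1) 1) piL b in
                c ^ 2 = (l * \<nu> * b + l ^ 2) / 2 \<and> is_square (c + l) \<and>
                (\<forall>c'. c' ^ 2 = (l * \<nu> * b + l ^ 2) / 2 \<and> is_square (c' + l) \<longrightarrow> c' = c))) \<and>
          (\<forall>b \<in> Bset l 1 (-1).
             (let c = inv_into (Bset l 1 (-1)) sigL b in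
                c ^ 2 = (- l * \<nu> * b + l ^ 2) / 2 \<and> \<not> is_square (c + l) \<and>
                (\<forall>c'. c' ^ 2 = (- l * \<nu> * b + l ^ 2) / 2 \<and> \<not> is_square (c' + l) \<longrightarrow> c' = c))))"
proof -
  have e1: "(\<lambda>b. (2 * (of_int (leg (2*l))::'a) / l) * b ^ 2 - of_int (leg (2*l)) * l) = piF l"
    by (rule ext) (simp add: piF_def kF_def nuF_def)
  have e2: "(\<lambda>b. - (2 * (of_int (leg (2*l))::'a) / l) * b ^ 2 + of_int (leg (2*l)) * l) = (\<lambda>b. - piF l b)"
    by (rule ext) (simp add: piF_def kF_def nuF_def)
  have e3: "2 * (of_int (leg (2*l))::'a) / l = kF l" by (simp add: kF_def nuF_def)
  have e4: "(of_int (leg (2*l))::'a) = nuF l" by (simp add: nuF_def)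
  have e5: "Bset l (- leg (2*l)) (- leg (2*l)) = AF l" by (simp add: AF_def)
  have P1: "bij_betw (piF l) (Bset l (-1) 1) (Bset l (-1) 1)" by (rule pi_bij[OF oddq l])
  have P2: "bij_betw (\<lambda>b. - piF l b) (Bset l 1 (-1)) (Bset l 1 (-1))" by (rule sig_bij[OF oddq l])
  have P3: "\<forall>b\<in>Bset l (-1) 1. inv_into (Bset l (-1) 1) (piF l) b = kF l ^ (mval TYPE('a) - 1) * (\<Prod>a\<in>AF l. b - a)"
    using pi_formula[OF l] by blast
  have P4: "\<forall>b\<in>Bset l 1 (-1). inv_into (Bset l 1 (-1)) (\<lambda>b. - piF l b) b
     = - of_int (leg (2::'a)) * kF l ^ (mval TYPE('a) - 1) * (\<Prod>a\<in>AF l. b - a)"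
    using sig_formula[OF l] by blast
  have P5: "\<forall>b\<in>Bset l (-1) 1. (inv_into (Bset l (-1) 1) (piF l) b) ^ 2 = (l * nuF l * b + l^2) / 2 \<and>
         is_square (inv_into (Bset l (-1) 1) (piF l) b + l) \<and>
         (\<forall>c'. c' ^ 2 = (l * nuF l * b + l^2) / 2 \<and> is_square (c' + l) \<longrightarrow> c' = inv_into (Bset l (-1) 1) (piF l) b)"
    using pi_roots[OF l] by blast
  have P6: "\<forall>b\<in>Bset l 1 (-1). (inv_into (Bset l 1 (-1)) (\<lambda>b. - piF l b) b) ^ 2 = (- l * nuF l * b + l^2) / 2 \<and>
         \<not> is_square (inv_into (Bset l 1 (-1)) (\<lambda>b. - piF l b) b + l) \<and>
         (\<forall>c'. c' ^ 2 = (- l * nuF l * b + l^2) / 2 \<and> \<not> is_square (c' + l) \<longrightarrow> c' = inv_into (Bset l 1 (-1)) (\<lambda>b. - piF l b) b)"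
    using sig_roots[OF l] by blast
  show ?thesis unfolding Let_def unfolding e1 e2 unfolding e3 unfolding e4 e5 by (intro conjI P1 P2 P3 P4 P5 P6)
qed

end

context
  assumes "SORT_CONSTRAINT('a::{finite,field})"
  assumes oddq: "odd (CARD('a))"
begin

lemma part12:
  shows "(bij_betw (\<lambda>b::'a. b ^ 2 - 2) (Bset 2 (-1) 1) (Bset 2 (-1) 1) \<and>
    (\<forall>b \<in> Bset (2::'a) (-1) 1.
       inv_into (Bset 2 (-1) 1) (\<lambda>b. b ^ 2 - 2) b = (\<Prod>a \<in> Bset 2 (-1) (-1). b - a) \<and>
       (let c = inv_into (Bset 2 (-1) 1) (\<lambda>b. b ^ 2 - 2) b in
          c ^ 2 = 2 + b \<and> is_square (2 + c) \<and>
          (\<forall>c'. c' ^ 2 = 2 + b \<and> is_square (2 + c') \<longrightarrow> c' = c)))) \<and>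
   (bij_betw (\<lambda>b::'a. 2 - b ^ 2) (Bset 2 1 (-1)) (Bset 2 1 (-1)) \<and>
    (\<forall>b \<in> Bset (2::'a) 1 (-1).
       inv_into (Bset 2 1 (-1)) (\<lambda>b. 2 - b ^ 2) b
         = - of_int (leg (2::'a)) * (\<Prod>a \<in> Bset 2 (-1) (-1). b - a) \<and>
       (let c = inv_into (Bset 2 1 (-1)) (\<lambda>b. 2 - b ^ 2) b in
          c ^ 2 = 2 - b \<and> \<not> is_square (c + 2) \<and>
          (\<forall>c'. c' ^ 2 = 2 - b \<and> \<not> is_square (c' + 2) \<longrightarrow> c' = c))))"
proof -
  have h2: "(2::'a) \<noteq> 0" by (rule two_ne0[OF oddq])
  have "leg ((2::'a) ^ 2) = 1" by (rule leg_sq[OF oddq h2])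
  hence leg4: "leg (2 * 2 :: 'a) = 1" by (simp add: power2_eq_square)
  have nu: "nuF (2::'a) = 1" unfolding nuF_def leg4 by simp
  have k: "kF (2::'a) = 1" using h2 by (simp add: kF_def nu)
  have f1: "(\<lambda>b::'a. b^2 - 2) = piF 2" by (rule ext) (simp add: piF_def k nu)
  have f2: "(\<lambda>b::'a. 2 - b^2) = (\<lambda>b. - piF 2 b)" by (rule ext) (simp add: piF_def k nu)
  have f3: "Bset (2::'a) (-1) (-1) = AF 2" unfolding AF_def leg4 by simp
  have eq1: "(2 * nuF 2 * b + 2^2) / 2 = 2 + b" for b :: 'a using h2 by (simp add: nu field_simps)
  have eq2: "(- 2 * nuF 2 * b + 2^2) / 2 = 2 - b" for b :: 'a using h2 by (simp add: nu field_simps)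
  have Q1: "\<forall>b\<in>Bset (2::'a) (-1) 1. inv_into (Bset 2 (-1) 1) (piF 2) b = (\<Prod>a\<in>AF 2. b - a) \<and>
     (inv_into (Bset 2 (-1) 1) (piF 2) b ^ 2 = 2 + b \<and> is_square (2 + inv_into (Bset 2 (-1) 1) (piF 2) b) \<and>
      (\<forall>c'. c' ^ 2 = 2 + b \<and> is_square (2 + c') \<longrightarrow> c' = inv_into (Bset 2 (-1) 1) (piF 2) b))"
  proof
    fix b :: 'a assume b: "b \<in> Bset 2 (-1) 1"
    have A: "inv_into (Bset 2 (-1) 1) (piF 2) b = (\<Prod>a\<in>AF 2. b - a)"
      using pi_formula[OF oddq h2 b] by (simp add: k)
    have R: "inv_into (Bset 2 (-1) 1) (piF 2) b ^ 2 = 2 + b \<and>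
         is_square (inv_into (Bset 2 (-1) 1) (piF 2) b + 2) \<and>
         (\<forall>c'. c' ^ 2 = 2 + b \<and> is_square (c' + 2) \<longrightarrow> c' = inv_into (Bset 2 (-1) 1) (piF 2) b)"
      using pi_roots[OF oddq h2 b] unfolding eq1 .
    show "inv_into (Bset 2 (-1) 1) (piF 2) b = (\<Prod>a\<in>AF 2. b - a) \<and>
     (inv_into (Bset 2 (-1) 1) (piF 2) b ^ 2 = 2 + b \<and> is_square (2 + inv_into (Bset 2 (-1) 1) (piF 2) b) \<and>
      (\<forall>c'. c' ^ 2 = 2 + b \<and> is_square (2 + c') \<longrightarrow> c' = inv_into (Bset 2 (-1) 1) (piF 2) b))"
      using A R by (simp add: add.commute)
  qed
  have Q2: "\<forall>b\<in>Bset (2::'a) 1 (-1). inv_into (Bset 2 1 (-1)) (\<lambda>b. - piF 2 b) b = - of_int (leg (2::'a)) * (\<Prod>a\<in>AF 2. b - a) \<and>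
     (inv_into (Bset 2 1 (-1)) (\<lambda>b. - piF 2 b) b ^ 2 = 2 - b \<and> \<not> is_square (inv_into (Bset 2 1 (-1)) (\<lambda>b. - piF 2 b) b + 2) \<and>
      (\<forall>c'. c' ^ 2 = 2 - b \<and> \<not> is_square (c' + 2) \<longrightarrow> c' = inv_into (Bset 2 1 (-1)) (\<lambda>b. - piF 2 b) b))"
  proof
    fix b :: 'a assume b: "b \<in> Bset 2 1 (-1)"
    have A: "inv_into (Bset 2 1 (-1)) (\<lambda>b. - piF 2 b) b = - of_int (leg (2::'a)) * (\<Prod>a\<in>AF 2. b - a)"
      using sig_formula[OF oddq h2 b] by (simp add: k)
    have R: "inv_into (Bset 2 1 (-1)) (\<lambda>b. - piF 2 b) b ^ 2 = 2 - b \<and>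
         \<not> is_square (inv_into (Bset 2 1 (-1)) (\<lambda>b. - piF 2 b) b + 2) \<and>
         (\<forall>c'. c' ^ 2 = 2 - b \<and> \<not> is_square (c' + 2) \<longrightarrow> c' = inv_into (Bset 2 1 (-1)) (\<lambda>b. - piF 2 b) b)"
      using sig_roots[OF oddq h2 b] unfolding eq2 .
    show "inv_into (Bset 2 1 (-1)) (\<lambda>b. - piF 2 b) b = - of_int (leg (2::'a)) * (\<Prod>a\<in>AF 2. b - a) \<and>
     (inv_into (Bset 2 1 (-1)) (\<lambda>b. - piF 2 b) b ^ 2 = 2 - b \<and> \<not> is_square (inv_into (Bset 2 1 (-1)) (\<lambda>b. - piF 2 b) b + 2) \<and>
      (\<forall>c'. c' ^ 2 = 2 - b \<and> \<not> is_square (c' + 2) \<longrightarrow> c' = inv_into (Bset 2 1 (-1)) (\<lambda>b. - piF 2 b) b))"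
      using A R by blast
  qed
  have P1: "bij_betw (piF (2::'a)) (Bset 2 (-1) 1) (Bset 2 (-1) 1)" by (rule pi_bij[OF oddq h2])
  have P2: "bij_betw (\<lambda>b. - piF (2::'a) b) (Bset 2 1 (-1)) (Bset 2 1 (-1))" by (rule sig_bij[OF oddq h2])
  show ?thesis unfolding Let_def f1 f2 f3 by (intro conjI P1 P2 Q1 Q2)
qed

end

theorem theorem7p1:
  fixes TYPE_DUMMY :: "'a::{finite,field} itself"
  assumes "odd (card (UNIV::'a set))"
  shows
  "(bij_betw (\<lambda>b::'a. b ^ 2 - 2) (Bset 2 (-1) 1) (Bset 2 (-1) 1) \<and>
    (\<forall>b \<in> Bset (2::'a) (-1) 1.
       inv_into (Bset 2 (-1) 1) (\<lambda>b. b ^ 2 - 2) b = (\<Prod>a \<in> Bset 2 (-1) (-1). b - a) \<and>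
       (let c = inv_into (Bset 2 (-1) 1) (\<lambda>b. b ^ 2 - 2) b in
          c ^ 2 = 2 + b \<and> is_square (2 + c) \<and>
          (\<forall>c'. c' ^ 2 = 2 + b \<and> is_square (2 + c') \<longrightarrow> c' = c)))) \<and>
   (bij_betw (\<lambda>b::'a. 2 - b ^ 2) (Bset 2 1 (-1)) (Bset 2 1 (-1)) \<and>
    (\<forall>b \<in> Bset (2::'a) 1 (-1).
       inv_into (Bset 2 1 (-1)) (\<lambda>b. 2 - b ^ 2) b
         = - of_int (leg (2::'a)) * (\<Prod>a \<in> Bset 2 (-1) (-1). b - a) \<and>
       (let c = inv_into (Bset 2 1 (-1)) (\<lambda>b. 2 - b ^ 2) b in
          c ^ 2 = 2 - b \<and> \<not> is_square (c + 2) \<and>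
          (\<forall>c'. c' ^ 2 = 2 - b \<and> \<not> is_square (c' + 2) \<longrightarrow> c' = c)))) \<and>
   (\<forall>l::'a. l \<noteq> 0 \<longrightarrow>
      (let n = leg (2 * l);
           \<nu> = (of_int n :: 'a);
           m = mval TYPE('a);
           piL = (\<lambda>b. (2 * \<nu> / l) * b ^ 2 - \<nu> * l);
           sigL = (\<lambda>b. - (2 * \<nu> / l) * b ^ 2 + \<nu> * l)
       in bij_betw piL (Bset l (-1) 1) (Bset l (-1) 1) \<and>
          bij_betw sigL (Bset l 1 (-1)) (Bset l 1 (-1)) \<and>
          (\<forall>b \<in> Bset l (-1) 1.
             inv_into (Bset l (-1) 1) piL b
               = (2 * \<nu> / l) ^ (m - 1) * (\<Prod>a \<in> Bset l (-n) (-n). b - a)) \<and>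
          (\<forall>b \<in> Bset l 1 (-1).
             inv_into (Bset l 1 (-1)) sigL b
               = - of_int (leg (2::'a)) * (2 * \<nu> / l) ^ (m - 1) * (\<Prod>a \<in> Bset l (-n) (-n). b - a)) \<and>
          (\<forall>b \<in> Bset l (-1) 1.
             (let c = inv_into (Bset l (-1) 1) piL b in
                c ^ 2 = (l * \<nu> * b + l ^ 2) / 2 \<and> is_square (c + l) \<and>
                (\<forall>c'. c' ^ 2 = (l * \<nu> * b + l ^ 2) / 2 \<and> is_square (c' + l) \<longrightarrow> c' = c))) \<and>
          (\<forall>b \<in> Bset l 1 (-1).
             (let c = inv_into (Bset l 1 (-1)) sigL b in
                c ^ 2 = (- l * \<nu> * b + l ^ 2) / 2 \<and> \<not> is_square (c + l) \<and>
                (\<forall>c'. c' ^ 2 = (- l * \<nu> * b + l ^ 2) / 2 \<and> \<not> is_square (c' + l) \<longrightarrow> c' = c)))))"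
proof -
  have oq: "odd CARD('a)" using assms by simp
  show ?thesis using part12[OF oq] main3[OF oq] by blast
qed


end
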